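(* For every $r\ge\sigma>0$, the distribution $\mathcal{N}(0,\sigma^2I_d)$ has $(r,\frac{\sigma^2}{r},\frac{1}{20})$ margins.
   Context: A distribution $\mathcal{D}$ on $\mathbb{R}^d$ has $(r,\alpha,\gamma)$ margins if for all $\beta\in\mathbb{R}^d\setminus\{0\}$ and all $b\le r\|\beta\|$, with $e\sim\mathcal{D}$, $\Pr[\beta\cdot e>b+\alpha\|\beta\|\mid\beta\cdot e\ge b]\ge\gamma$. *)

theory Defs
  imports "HOL-Probability.Probability"
begin

definition gaussian_iso :: "real \<Rightarrow> ('a::euclidean_space) measure" where
  "gaussian_iso \<sigma> = density lborel (\<lambda>x. ennreal (\<Prod>i\<in>Basis. normal_density 0 \<sigma> (x \<bullet> i)))"

definition has_margins :: "('a::euclidean_space) measure \<Rightarrow> real \<Rightarrow> real \<Rightarrow> real \<Rightarrow> bool" where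
  "has_margins D r \<alpha> \<gamma> \<longleftrightarrow>
     (\<forall>\<beta>::'a. \<beta> \<noteq> 0 \<longrightarrow> (\<forall>b. b \<le> r * norm \<beta> \<longrightarrow>
        cond_prob D (\<lambda>e. \<beta> \<bullet> e > b + \<alpha> * norm \<beta>) (\<lambda>e. \<beta> \<bullet> e \<ge> b) \<ge> \<gamma>))"

end

theory Submission
  imports Defs
begin

abbreviation "J A \<equiv> integral\<^sup>L lborel (\<lambda>x. std_normal_density x * indicator A x)"

lemma intS: "A \<in> sets borel \<Longrightarrow> integrable lborel (\<lambda>x. std_normal_density x * indicator A x)"
  using integrable_mult_indicator[of A lborel std_normal_density] by (simp add: mult.commute)

lemma S_shift: "std_normal_density (y + a) = std_normal_density y * exp (- a*y - a^2/2)"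
proof -
  have "-((y + a)^2)/2 = -(y^2)/2 + (- a*y - a^2/2)" by (simp add: power2_eq_square field_simps)
  then show ?thesis unfolding std_normal_density_def by (simp add: exp_add[symmetric])
qed

lemma J_shift: "J {c+a..} = integral\<^sup>L lborel (\<lambda>y. std_normal_density y * exp (- a*y - a^2/2) * indicator {c..} y)"
proof -
  have "J {c+a..} = integral\<^sup>L lborel (\<lambda>y. std_normal_density (a + 1*y) * indicator {c+a..} (a + 1*y))"
    using lborel_integral_real_affine[of 1 "\<lambda>x. std_normal_density x * indicator {c+a..} x" a] by simp
  also have "\<dots> = integral\<^sup>L lborel (\<lambda>y. std_normal_density y * exp (- a*y - a^2/2) * indicator {c..} y)"
    by (intro Bochner_Integration.integral_cong refl) (auto simp: S_shift add.commute indicator_def)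
  finally show ?thesis .
qed

lemma int_shift: "integrable lborel (\<lambda>y. std_normal_density y * exp (- a*y - a^2/2) * indicator {c..} y)"
proof (rule Bochner_Integration.integrable_bound)
  show "integrable lborel (\<lambda>y. std_normal_density (a + 1*y))"
    by (rule lborel_integrable_real_affine) auto
  show "AE x in lborel. norm (std_normal_density x * exp (- a*x - a^2/2) * indicator {c..} x) \<le> norm (std_normal_density (a + 1*x))"
    by (auto simp: indicator_def S_shift add.commute)
qed auto

lemma J_nonneg: "0 \<le> J A"
  by (intro integral_nonneg_AE) (auto simp: indicator_def)

lemma J_mono: "A \<subseteq> B \<Longrightarrow> A \<in> sets borel \<Longrightarrow> B \<in> sets borel \<Longrightarrow> J A \<le> J B"
  by (intro integral_mono intS) (auto simp: indicator_def)

lemma J_UNIV: "J UNIV = 1"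
  by simp

lemma J_le1: "A \<in> sets borel \<Longrightarrow> J A \<le> 1"
  using J_mono[of A UNIV] by simp

lemma J_split: "J {t..} = J {t..<t+1} + J {t+1..}"
proof -
  have "J {t..} = integral\<^sup>L lborel (\<lambda>x. std_normal_density x * indicator {t..<t+1} x + std_normal_density x * indicator {t+1..} x)"
    by (intro Bochner_Integration.integral_cong refl) (auto simp: indicator_def)
  also have "\<dots> = J {t..<t+1} + J {t+1..}"
    by (intro Bochner_Integration.integral_add intS) auto
  finally show ?thesis .
qed

lemma J_open: "J {c<..} = J {c..}"
  by (intro integral_cong_AE) (auto intro!: eventually_mono[OF AE_lborel_singleton[of c]] simp: indicator_def)

lemma J_tail: assumes "0 \<le> t" shows "J {t+1..} \<le> exp (-t-1/2) * J {t..}"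
proof -
  have "J {t+1..} = integral\<^sup>L lborel (\<lambda>y. std_normal_density y * exp (- 1*y - 1^2/2) * indicator {t..} y)"
    by (rule J_shift)
  also have "\<dots> \<le> integral\<^sup>L lborel (\<lambda>y. exp (-t-1/2) * (std_normal_density y * indicator {t..} y))"
  proof (intro integral_mono)
    show "integrable lborel (\<lambda>y. exp (-t-1/2) * (std_normal_density y * indicator {t..} y))"
      by (intro integrable_mult_right intS) auto
    have "integrable lborel (\<lambda>y. exp (-t-1/2) * (std_normal_density y * indicator {t..} y))"
      by (intro integrable_mult_right intS) auto
    show "integrable lborel (\<lambda>y. std_normal_density y * exp (- 1*y - 1^2/2) * indicator {t..} y)"
      by (rule int_shift)
    fix y
    have "t \<le> y \<Longrightarrow> exp (- y - 1 / 2) \<le> exp (-t-1/2)" by simp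
    then show "std_normal_density y * exp (- 1*y - 1^2/2) * indicator {t..} y \<le> exp (-t-1/2) * (std_normal_density y * indicator {t..} y)"
      by (auto simp: indicator_def mult.commute intro!: mult_left_mono)
  qed
  also have "\<dots> = exp (-t-1/2) * J {t..}" by simp
  finally show ?thesis .
qed

lemma J_lower: assumes "0 < a" shows "J {t+a..} \<ge> exp (-a*(t+1) - a^2/2) * J {t..<t+1}"
proof -
  have "exp (-a*(t+1) - a^2/2) * J {t..<t+1} = integral\<^sup>L lborel (\<lambda>y. exp (-a*(t+1) - a^2/2) * (std_normal_density y * indicator {t..<t+1} y))"
    by simp
  also have "\<dots> \<le> integral\<^sup>L lborel (\<lambda>y. std_normal_density y * exp (- a*y - a^2/2) * indicator {t..} y)"
  proof (intro integral_mono)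
    show "integrable lborel (\<lambda>y. exp (-a*(t+1) - a^2/2) * (std_normal_density y * indicator {t..<t+1} y))"
      by (intro integrable_mult_right intS) auto
    show "integrable lborel (\<lambda>y. std_normal_density y * exp (- a*y - a^2/2) * indicator {t..} y)"
      by (rule int_shift)
    fix y show "exp (-a*(t+1) - a^2/2) * (std_normal_density y * indicator {t..<t+1} y) \<le> std_normal_density y * exp (- a*y - a^2/2) * indicator {t..} y"
    proof -
      have "y < t+1 \<Longrightarrow> exp (-a*(t+1) - a^2/2) \<le> exp (- a*y - a^2/2)" using assms by simp
      then show ?thesis using assms by (auto simp: indicator_def mult.commute intro!: mult_left_mono)
    qed
  qed
  also have "\<dots> = J {t+a..}" by (rule J_shift[symmetric])
  finally show ?thesis .
qed


lemma J_half: "J {0..} = 1/2"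
proof -
  have "J {..<0} = integral\<^sup>L lborel (\<lambda>y. std_normal_density (0 + (-1)*y) * indicator {..<0} (0 + (-1)*y))"
    using lborel_integral_real_affine[of "-1" "\<lambda>x. std_normal_density x * indicator {..<0} x" 0] by simp
  also have "\<dots> = J {0<..}"
    by (intro Bochner_Integration.integral_cong refl) (auto simp: std_normal_density_def indicator_def)
  also have "\<dots> = J {0..}" by (rule J_open)
  finally have 1: "J {..<0} = J {0..}" .
  have "J UNIV = integral\<^sup>L lborel (\<lambda>x. std_normal_density x * indicator {..<0} x + std_normal_density x * indicator {0..} x)"
    by (intro Bochner_Integration.integral_cong refl) (auto simp: indicator_def)
  also have "\<dots> = J {..<0} + J {0..}"
    by (intro Bochner_Integration.integral_add intS) auto
  finally show ?thesis using 1 J_UNIV by simp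
qed

lemma J_one: "J {1..} \<ge> 1/20"
proof -
  have "J {0..<1} \<le> integral\<^sup>L lborel (\<lambda>x::real. (1 / sqrt (2*pi)) * indicator {0..<1} x)"
  proof (rule Bochner_Integration.integral_mono)
    show "integrable lborel (\<lambda>x. std_normal_density x * indicator {0..<1} x)" by (rule intS) auto
    show "integrable lborel (\<lambda>x::real. (1 / sqrt (2*pi)) * indicator {0..<1} x)"
      by (intro integrable_mult_right integrable_real_indicator) auto
    fix x :: real
    have "exp (- (x^2 / 2)) \<le> 1" by simp
    then have "exp (- (x^2 / 2)) / sqrt (2 * pi) \<le> 1 / sqrt (2 * pi)" by (intro divide_right_mono) auto
    then show "std_normal_density x * indicator {0..<1} x \<le> (1 / sqrt (2*pi)) * indicator {0..<1} x"
      by (auto simp: std_normal_density_def indicator_def)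
  qed
  also have "\<dots> = 1 / sqrt (2*pi)" by simp
  also have "\<dots> \<le> 9/20"
  proof -
    have "(20/9)^2 \<le> 2*pi" using pi_gt3 by (simp add: power2_eq_square)
    then have "20/9 \<le> sqrt (2*pi)" using real_le_rsqrt by blast
    then show ?thesis by (simp add: field_simps)
  qed
  finally have "J {0..<1} \<le> 9/20" .
  moreover have "J {0..} = J {0..<1} + J {1..}" using J_split[of 0] by simp
  ultimately show ?thesis using J_half by simp
qed

lemma exp_facts: "exp (1::real) < 272/100" "exp (1/2::real) < 165/100" "exp (1/2::real) \<ge> 3/2"
  "exp (1::real) \<ge> 5/2"
proof -
  show e: "exp (1::real) < 272/100"
    using e_less_272 by simp
  have "exp (1/2::real) ^ 2 = exp 1" by (simp add: exp_double[symmetric] power2_eq_square exp_add[symmetric])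
  then have "exp (1/2::real) ^ 2 < (165/100)^2" using e by (simp add: power2_eq_square)
  then show "exp (1/2::real) < 165/100"
    using power_less_imp_less_base by fastforce
  show "exp (1/2::real) \<ge> 3/2" using exp_ge_add_one_self[of "1/2::real"] by simp
  show "exp (1::real) \<ge> 5/2" using exp_lower_Taylor_quadratic[of "1::real"] by simp
qed

lemma num_bound:
  fixes a t :: real
  assumes "0 < a" "a \<le> 1" "0 \<le> t" "t * a \<le> 1"
  shows "exp (-a*(t+1) - a^2/2) * (1 - exp (-t-1/2)) \<ge> 1/20"
proof (cases "t \<ge> 1")
  case True
  have "a*(t+1) + a^2/2 \<le> 5/2"
  proof -
    have "a^2 \<le> 1" using assms by (simp add: power_le_one)
    then show ?thesis using assms by (simp add: algebra_simps)
  qed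
  then have "exp (-a*(t+1) - a^2/2) \<ge> exp (-5/2)" by simp
  moreover have "exp (-5/2::real) = 1 / (exp 1 * exp 1 * exp (1/2))"
    by (simp add: exp_minus exp_add[symmetric] field_simps)
  moreover have "exp 1 * exp 1 * exp (1/2::real) \<le> 272/100 * (272/100) * (165/100)"
    using exp_facts by (intro mult_mono) auto
  moreover have "1 / (exp 1 * exp 1 * exp (1/2::real)) \<ge> 1 / (272/100 * (272/100) * (165/100))"
    by (rule divide_left_mono) (use \<open>exp 1 * exp 1 * exp (1/2::real) \<le> 272/100 * (272/100) * (165/100)\<close> in auto)
  ultimately have A: "exp (-a*(t+1) - a^2/2) \<ge> 1 / (272/100 * (272/100) * (165/100))"
    by linarith
  have "exp (-t-1/2) \<le> exp (-3/2)" using True by simp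
  moreover have "exp (-3/2::real) = 1 / (exp 1 * exp (1/2))"
    by (simp add: exp_minus exp_add[symmetric] field_simps)
  moreover have "exp 1 * exp (1/2::real) \<ge> 5/2 * (3/2)"
    using exp_facts by (intro mult_mono) auto
  moreover have "1 / (exp 1 * exp (1/2::real)) \<le> 4/15"
    using \<open>exp 1 * exp (1/2::real) \<ge> 5/2 * (3/2)\<close> by (simp add: field_simps)
  ultimately have B: "1 - exp (-t-1/2) \<ge> 11/15"
    by linarith
  have "1/(272/100 * (272/100) * (165/100)) = (1000000/12207360::real)" by simp
  then have "1/20 \<le> 1 / (272/100 * (272/100) * (165/100)) * (11/15::real)" by simp
  also have "\<dots> \<le> exp (-a*(t+1) - a^2/2) * (1 - exp (-t-1/2))"
    using A B by (intro mult_mono) auto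
  finally show ?thesis .
next
  case False
  define w where "w = exp (-t-1/2)"
  have X1: "exp (-a*(t+1) - a^2/2) \<ge> exp (-(t+1) - 1/2)"
  proof -
    have "a^2 \<le> 1" using assms by (simp add: power_le_one)
    moreover have "a*(t+1) \<le> t+1" using assms by (simp add: mult_left_le_one_le)
    ultimately show ?thesis by simp
  qed
  have X2: "exp (-(t+1) - 1/2) = exp (-1) * w" by (simp add: w_def exp_add[symmetric])
  have X3: "exp (-1::real) \<ge> 1/(272/100)"
    using exp_facts by (simp add: exp_minus field_simps)
  have "w > 0" by (simp add: w_def)
  have X4: "exp (-1) * w \<ge> 1/(272/100) * w"
    using X3 \<open>w > 0\<close> by (intro mult_right_mono) auto
  have A: "exp (-a*(t+1) - a^2/2) \<ge> 1/(272/100) * w"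
    using X1 X2 X4 by linarith
  have e15: "exp 1 * exp (1/2::real) \<le> 272/100 * (165/100)"
    using exp_facts by (intro mult_mono) auto
  have "(1/5::real) \<le> 1 / (272/100 * (165/100))" by simp
  also have "\<dots> \<le> 1 / (exp 1 * exp (1/2::real))"
    by (rule divide_left_mono) (use e15 in auto)
  also have "\<dots> = exp (-3/2)"
    by (simp add: exp_minus exp_add[symmetric] field_simps)
  also have "\<dots> \<le> w" using False by (simp add: w_def)
  finally have w1: "w \<ge> 1/5" .
  have "w \<le> exp (-1/2)" using assms by (simp add: w_def)
  also have "exp (-1/2::real) = 1 / exp (1/2)" by (simp add: exp_minus field_simps)
  also have "1 / exp (1/2::real) \<le> 1 / (3/2)"
    by (rule divide_left_mono) (use exp_facts in auto)
  finally have w2: "w \<le> 2/3" by simp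
  have "w * (1 - w) \<ge> 16/100"
  proof -
    have "(w - 1/5) * (4/5 - w) \<ge> 0" using w1 w2 by simp
    moreover have "w * (1 - w) = (w - 1/5) * (4/5 - w) + 16/100" by algebra
    ultimately show ?thesis by linarith
  qed
  have "1/20 \<le> 1/(272/100) * (w * (1 - w))" using \<open>w * (1 - w) \<ge> 16/100\<close> by simp
  also have "\<dots> = (1/(272/100) * w) * (1 - w)" by simp
  also have "\<dots> \<le> exp (-a*(t+1) - a^2/2) * (1 - w)"
    using A w2 by (intro mult_right_mono) auto
  finally show ?thesis by (simp add: w_def)
qed


lemma J_pos: "J {t..} > 0"
proof -
  define c where "c = (1 / sqrt (2*pi)) * exp (- ((\<bar>t\<bar>+1)^2/2))"
  have cpos: "c > 0" by (simp add: c_def)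
  have "c = integral\<^sup>L lborel (\<lambda>x::real. c * indicator {t..<t+1} x)" by simp
  also have "\<dots> \<le> J {t..<t+1}"
  proof (rule Bochner_Integration.integral_mono)
    show "integrable lborel (\<lambda>x. std_normal_density x * indicator {t..<t+1} x)" by (rule intS) auto
    show "integrable lborel (\<lambda>x::real. c * indicator {t..<t+1} x)"
      by (intro integrable_mult_right integrable_real_indicator) auto
    fix x :: real
    show "c * indicator {t..<t+1} x \<le> std_normal_density x * indicator {t..<t+1} x"
    proof (cases "x \<in> {t..<t+1}")
      case True
      then have "\<bar>x\<bar> \<le> \<bar>t\<bar> + 1" by auto
      then have "x^2 \<le> (\<bar>t\<bar>+1)^2"
        by (metis abs_ge_zero power2_abs power_mono)
      then have "exp (- ((\<bar>t\<bar>+1)^2/2)) \<le> exp (- (x^2/2))" by simp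
      then have "c \<le> std_normal_density x"
        unfolding c_def std_normal_density_def by (intro mult_left_mono) auto
      then show ?thesis using True by simp
    qed simp
  qed
  also have "\<dots> \<le> J {t..}" by (rule J_mono) auto
  finally show ?thesis using cpos by simp
qed

lemma J_ratio:
  assumes "0 < a" "a \<le> 1" "t * a \<le> 1"
  shows "J {t+a<..} / J {t..} \<ge> 1/20"
proof (cases "t < 0")
  case True
  have "J {1..} \<le> J {t+a<..}" using True assms by (intro J_mono) auto
  then have n: "J {t+a<..} \<ge> 1/20" using J_one by simp
  have d: "J {t..} \<le> 1" by (rule J_le1) auto
  have "J {t+a<..} / J {t..} \<ge> J {t+a<..}"
    using J_pos[of t] d J_nonneg[of "{t+a<..}"] by (simp add: le_divide_eq mult_left_le)
  then show ?thesis using n by linarith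
next
  case False
  then have t0: "0 \<le> t" by simp
  define E where "E = exp (-a*(t+1) - a^2/2)"
  have E0: "E \<ge> 0" by (simp add: E_def)
  have "J {t+a<..} = J {t+a..}" by (rule J_open)
  also have "\<dots> \<ge> E * J {t..<t+1}" using J_lower[OF assms(1)] by (simp add: E_def)
  finally have 1: "J {t+a<..} \<ge> E * J {t..<t+1}" .
  have "J {t..<t+1} \<ge> (1 - exp (-t-1/2)) * J {t..}"
    using J_split[of t] J_tail[OF t0] by (simp add: algebra_simps)
  then have "E * J {t..<t+1} \<ge> E * ((1 - exp (-t-1/2)) * J {t..})"
    using E0 by (intro mult_left_mono) auto
  moreover have "E * (1 - exp (-t-1/2)) \<ge> 1/20"
    using num_bound[OF assms(1,2) t0 assms(3)] by (simp add: E_def)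
  ultimately have "J {t+a<..} \<ge> 1/20 * J {t..}"
    using 1 J_nonneg[of "{t..}"] by (smt (verit, best) mult.assoc mult_right_mono)
  then show ?thesis using J_pos[of t] by (simp add: le_divide_eq)
qed



abbreviation "NN \<sigma> \<equiv> density lborel (\<lambda>x. ennreal (normal_density 0 \<sigma> x))"

lemma NN_prob: "\<sigma> > 0 \<Longrightarrow> prob_space (NN \<sigma>)" by (rule prob_space_normal_density)

lemma sets_NN[simp]: "sets (NN \<sigma>) = sets borel" by simp

lemma product_density:
  fixes I :: "'i set" and g :: "real \<Rightarrow> real"
  assumes I: "finite I" and g[measurable]: "g \<in> borel_measurable borel" and g0: "\<And>x. g x \<ge> 0"
    and fin: "prob_space (density lborel (\<lambda>x. ennreal (g x)))"
  shows "density (PiM I (\<lambda>_. lborel)) (\<lambda>f. ennreal (\<Prod>i\<in>I. g (f i))) = PiM I (\<lambda>_. density lborel (\<lambda>x. ennreal (g x)))"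
proof -
  let ?D = "density lborel (\<lambda>x. ennreal (g x))"
  interpret D: prob_space ?D by (rule fin)
  interpret PD: product_sigma_finite "\<lambda>_::'i. ?D"
    unfolding product_sigma_finite_def by (auto intro: D.sigma_finite_measure)
  interpret PL: product_sigma_finite "\<lambda>_::'i. lborel :: real measure"
    unfolding product_sigma_finite_def by (auto intro: sigma_finite_lborel)
  show ?thesis
  proof (rule PD.PiM_eqI[OF I])
    show "sets (density (PiM I (\<lambda>_. lborel)) (\<lambda>f. ennreal (\<Prod>i\<in>I. g (f i)))) = sets (PiM I (\<lambda>_. ?D))"
      by (simp cong: sets_PiM_cong)
    fix A assume A: "\<And>i. i \<in> I \<Longrightarrow> A i \<in> sets ?D"
    then have A'[measurable]: "\<And>i. i \<in> I \<Longrightarrow> A i \<in> sets borel" by simp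
    have PiA: "Pi\<^sub>E I A \<in> sets (PiM I (\<lambda>_. lborel))"
      using A' by (intro sets_PiM_I_finite I) auto
    have "emeasure (density (PiM I (\<lambda>_. lborel)) (\<lambda>f. ennreal (\<Prod>i\<in>I. g (f i)))) (Pi\<^sub>E I A)
        = (\<integral>\<^sup>+ f. ennreal (\<Prod>i\<in>I. g (f i)) * indicator (Pi\<^sub>E I A) f \<partial>PiM I (\<lambda>_. lborel))"
      using PiA by (intro emeasure_density) (measurable, auto simp: I)
    also have "\<dots> = (\<integral>\<^sup>+ f. (\<Prod>i\<in>I. ennreal (g (f i)) * indicator (A i) (f i)) \<partial>PiM I (\<lambda>_. lborel))"
    proof (intro nn_integral_cong)
      fix f assume f: "f \<in> space (PiM I (\<lambda>_. lborel::real measure))"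
      have "ennreal (\<Prod>i\<in>I. g (f i)) = (\<Prod>i\<in>I. ennreal (g (f i)))"
        using g0 by (simp add: prod_ennreal)
      moreover have "indicator (Pi\<^sub>E I A) f = (\<Prod>i\<in>I. indicator (A i) (f i) :: ennreal)"
        using f I by (auto simp: indicator_def space_PiM PiE_iff)
      ultimately show "ennreal (\<Prod>i\<in>I. g (f i)) * indicator (Pi\<^sub>E I A) f = (\<Prod>i\<in>I. ennreal (g (f i)) * indicator (A i) (f i))"
        by (simp add: prod.distrib)
    qed
    also have "\<dots> = (\<Prod>i\<in>I. \<integral>\<^sup>+ x. ennreal (g x) * indicator (A i) x \<partial>lborel)"
      by (rule PL.product_nn_integral_prod[OF I]) (use A' in auto)
    also have "\<dots> = (\<Prod>i\<in>I. emeasure ?D (A i))"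
      using A' by (intro prod.cong refl) (simp add: emeasure_density)
    finally show "emeasure (density (PiM I (\<lambda>_. lborel)) (\<lambda>f. ennreal (\<Prod>i\<in>I. g (f i)))) (Pi\<^sub>E I A) = (\<Prod>i\<in>I. emeasure ?D (A i))" .
  qed
qed


definition EE :: "('a::euclidean_space \<Rightarrow> real) \<Rightarrow> 'a" where
  "EE f = (\<Sum>b\<in>Basis. f b *\<^sub>R b)"

abbreviation PP :: "real \<Rightarrow> ('a::euclidean_space \<Rightarrow> real) measure" where
  "PP \<sigma> \<equiv> PiM Basis (\<lambda>_. NN \<sigma>)"

lemma EE_inner: "i \<in> Basis \<Longrightarrow> EE f \<bullet> i = f i"
  by (simp add: EE_def inner_sum_left inner_Basis if_distrib cong: if_cong)

lemma EE_meas[measurable]: "EE \<in> PiM Basis (\<lambda>_. M) \<rightarrow>\<^sub>M (borel :: 'a::euclidean_space measure)"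
  if "sets M = sets (borel :: real measure)" for M
proof -
  have "sets (PiM Basis (\<lambda>_. M)) = sets (PiM (Basis::'a set) (\<lambda>_. lborel::real measure))"
    using that by (intro sets_PiM_cong) auto
  moreover have "(\<lambda>f. \<Sum>b\<in>Basis. f b *\<^sub>R b) \<in> PiM (Basis::'a set) (\<lambda>_. lborel::real measure) \<rightarrow>\<^sub>M (borel :: 'a measure)"
    by measurable
  ultimately show ?thesis unfolding EE_def by (simp cong: measurable_cong_sets)
qed

lemma gaussian_iso_eq:
  assumes "\<sigma> > 0"
  shows "gaussian_iso \<sigma> = distr (PP \<sigma>) (borel :: 'a::euclidean_space measure) EE"
proof -
  let ?G = "\<lambda>x::'a. ennreal (\<Prod>i\<in>Basis. normal_density 0 \<sigma> (x \<bullet> i))"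
  let ?L = "PiM (Basis::'a set) (\<lambda>_. lborel::real measure)"
  have Gm[measurable]: "?G \<in> borel_measurable borel" by measurable
  have "gaussian_iso \<sigma> = density (distr ?L borel EE) ?G"
    unfolding gaussian_iso_def EE_def by (subst lborel_eq) simp
  also have "\<dots> = distr (density ?L (\<lambda>f. ?G (EE f))) borel EE"
    by (rule density_distr) (auto intro: EE_meas)
  also have "density ?L (\<lambda>f. ?G (EE f)) = density ?L (\<lambda>f. ennreal (\<Prod>i\<in>Basis. normal_density 0 \<sigma> (f i)))"
    by (intro density_cong) (auto simp: EE_inner intro!: EE_meas)
  also have "\<dots> = PP \<sigma>"
    by (rule product_density) (auto intro: NN_prob assms)
  finally show ?thesis .
qed


lemma PP_prob: "\<sigma> > 0 \<Longrightarrow> prob_space (PP \<sigma> :: ('a::euclidean_space \<Rightarrow> real) measure)"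
  by (intro prob_space_PiM NN_prob)

lemma distr_coord: "\<sigma> > 0 \<Longrightarrow> i \<in> Basis \<Longrightarrow> sets M = sets (borel::real measure) \<Longrightarrow>
   distr (PP \<sigma> :: ('a::euclidean_space \<Rightarrow> real) measure) M (\<lambda>f. f i) = NN \<sigma>"
proof -
  assume s: "\<sigma> > 0" "i \<in> Basis" "sets M = sets (borel::real measure)"
  have "distr (PP \<sigma> :: ('a::euclidean_space \<Rightarrow> real) measure) M (\<lambda>f. f i) = distr (PP \<sigma> :: ('a \<Rightarrow> real) measure) (NN \<sigma>) (\<lambda>f. f i)"
    using s by (intro distr_cong) auto
  also have "\<dots> = NN \<sigma>"
    using s by (intro distr_PiM_component NN_prob)
  finally show ?thesis .
qed

lemma coord_distributed: "\<sigma> > 0 \<Longrightarrow> i \<in> Basis \<Longrightarrow>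
   distributed (PP \<sigma> :: ('a::euclidean_space \<Rightarrow> real) measure) lborel (\<lambda>f. f i) (normal_density 0 \<sigma>)"
  unfolding distributed_def
  by (auto simp: distr_coord measurable_component_singleton cong: measurable_cong_sets)

lemma coord_indep:
  assumes "\<sigma> > 0"
  shows "prob_space.indep_vars (PP \<sigma> :: ('a::euclidean_space \<Rightarrow> real) measure) (\<lambda>_. borel) (\<lambda>i f. f i) Basis"
proof -
  interpret P: prob_space "PP \<sigma> :: ('a \<Rightarrow> real) measure" by (rule PP_prob[OF assms])
  have "distr (PP \<sigma> :: ('a \<Rightarrow> real) measure) (PiM Basis (\<lambda>_. borel)) (\<lambda>x. \<lambda>i\<in>Basis. x i)
      = distr (PP \<sigma> :: ('a \<Rightarrow> real) measure) (PiM Basis (\<lambda>_. borel)) (\<lambda>x. x)"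
    by (intro distr_cong) (auto simp: space_PiM PiE_def extensional_restrict)
  also have "\<dots> = PP \<sigma>"
    by (intro distr_id2 sets_PiM_cong) auto
  also have "\<dots> = PiM Basis (\<lambda>i. distr (PP \<sigma> :: ('a \<Rightarrow> real) measure) borel (\<lambda>f. f i))"
    using assms by (intro PiM_cong) (auto simp: distr_coord)
  finally show ?thesis
    by (subst P.indep_vars_iff_distr_eq_PiM') (auto simp: measurable_component_singleton cong: measurable_cong_sets)
qed


lemma sum_sq_inner: "(\<Sum>i\<in>Basis. (\<beta> \<bullet> i)^2) = (norm (\<beta>::'a::euclidean_space))^2"
proof -
  have "(norm \<beta>)^2 = \<beta> \<bullet> \<beta>" by (simp add: power2_norm_eq_inner)
  also have "\<dots> = (\<Sum>i\<in>Basis. (\<beta> \<bullet> i) * (\<beta> \<bullet> i))" by (rule euclidean_inner)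
  finally show ?thesis by (simp add: power2_eq_square)
qed

lemma inner_EE: "\<beta> \<bullet> EE f = (\<Sum>i\<in>Basis. (\<beta> \<bullet> i) * f i)"
  by (simp add: EE_def inner_sum_right mult.commute)

lemma PP_inner_distributed:
  fixes \<beta> :: "'a::euclidean_space"
  assumes s: "\<sigma> > 0" and b: "\<beta> \<noteq> 0"
  shows "distributed (PP \<sigma> :: ('a \<Rightarrow> real) measure) lborel (\<lambda>f. (\<beta> \<bullet> EE f) / (\<sigma> * norm \<beta>)) std_normal_density"
proof -
  interpret P: prob_space "PP \<sigma> :: ('a \<Rightarrow> real) measure" by (rule PP_prob[OF s])
  define s0 where "s0 = \<sigma> * norm \<beta>"
  have s0: "s0 > 0" using s b by (simp add: s0_def)
  define I where "I = {i\<in>Basis. \<beta> \<bullet> i \<noteq> 0}"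
  define X where "X = (\<lambda>i (f::'a \<Rightarrow> real). (\<beta> \<bullet> i / s0) * f i)"
  define sg where "sg = (\<lambda>i::'a. \<bar>\<beta> \<bullet> i / s0\<bar> * \<sigma>)"
  have I: "finite I" "I \<subseteq> Basis" by (auto simp: I_def)
  have "I \<noteq> {}"
  proof
    assume "I = {}"
    then have "\<forall>i\<in>Basis. \<beta> \<bullet> i = 0" by (auto simp: I_def)
    then have "\<beta> = 0" by (simp add: euclidean_all_zero_iff)
    with b show False by simp
  qed
  have ind: "P.indep_vars (\<lambda>_. borel) X I"
    unfolding X_def
    by (rule P.indep_vars_compose2[OF P.indep_vars_subset[OF coord_indep[OF s] I(2)], where Y="\<lambda>i x. (\<beta> \<bullet> i / s0) * x"]) auto
  have pos: "\<And>i. i \<in> I \<Longrightarrow> 0 < sg i" using s s0 by (auto simp: sg_def I_def)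
  have dist: "distributed (PP \<sigma>) lborel (X i) (normal_density 0 (sg i))" if i: "i \<in> I" for i
  proof -
    have "distributed (PP \<sigma>) lborel (\<lambda>x. 0 + (\<beta> \<bullet> i / s0) * x i) (normal_density (0 + (\<beta> \<bullet> i / s0) * 0) (\<bar>\<beta> \<bullet> i / s0\<bar> * \<sigma>))"
      by (rule P.normal_density_affine[OF coord_distributed[OF s]]) (use i s0 s in \<open>auto simp: I_def\<close>)
    then show ?thesis by (simp add: X_def sg_def)
  qed
  have "distributed (PP \<sigma>) lborel (\<lambda>x. \<Sum>i\<in>I. X i x) (normal_density (\<Sum>i\<in>I. 0) (sqrt (\<Sum>i\<in>I. (sg i)\<^sup>2)))"
    by (rule P.sum_indep_normal[OF I(1) \<open>I \<noteq> {}\<close> ind pos dist])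
  moreover have "(\<Sum>i\<in>I. (sg i)\<^sup>2) = 1"
  proof -
    have "(\<Sum>i\<in>I. (sg i)\<^sup>2) = (\<Sum>i\<in>I. (\<beta> \<bullet> i)^2 / (norm \<beta>)^2)"
      by (rule sum.cong) (use s in \<open>auto simp: sg_def s0_def power_divide power_mult_distrib\<close>)
    also have "\<dots> = (\<Sum>i\<in>Basis. (\<beta> \<bullet> i)^2 / (norm \<beta>)^2)"
      by (rule sum.mono_neutral_left) (auto simp: I_def)
    also have "\<dots> = 1" using b by (simp add: sum_divide_distrib[symmetric] sum_sq_inner)
    finally show ?thesis .
  qed
  moreover have "(\<lambda>x. \<Sum>i\<in>I. X i x) = (\<lambda>f. (\<beta> \<bullet> EE f) / (\<sigma> * norm \<beta>))"
  proof
    fix f :: "'a \<Rightarrow> real"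
    have "(\<Sum>i\<in>I. X i f) = (\<Sum>i\<in>Basis. X i f)"
      by (rule sum.mono_neutral_left) (auto simp: I_def X_def)
    also have "\<dots> = (\<beta> \<bullet> EE f) / s0" by (simp add: X_def inner_EE sum_divide_distrib)
    finally show "(\<Sum>i\<in>I. X i f) = (\<beta> \<bullet> EE f) / (\<sigma> * norm \<beta>)" by (simp add: s0_def)
  qed
  ultimately show ?thesis by simp
qed

lemma gaussian_inner_distributed:
  fixes \<beta> :: "'a::euclidean_space"
  assumes s: "\<sigma> > 0" and b: "\<beta> \<noteq> 0"
  shows "distributed (gaussian_iso \<sigma> :: 'a measure) lborel (\<lambda>e. (\<beta> \<bullet> e) / (\<sigma> * norm \<beta>)) std_normal_density"
proof -
  have m: "EE \<in> (PP \<sigma> :: ('a \<Rightarrow> real) measure) \<rightarrow>\<^sub>M (borel :: 'a measure)" by (rule EE_meas) simp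
  have Y: "(\<lambda>e::'a. (\<beta> \<bullet> e) / (\<sigma> * norm \<beta>)) \<in> borel \<rightarrow>\<^sub>M lborel" by simp
  have D: "distributed (PP \<sigma> :: ('a \<Rightarrow> real) measure) lborel (\<lambda>f. (\<beta> \<bullet> EE f) / (\<sigma> * norm \<beta>)) std_normal_density"
    by (rule PP_inner_distributed[OF s b])
  show ?thesis
    unfolding gaussian_iso_eq[OF s] distributed_def
  proof (intro conjI)
    show "distr (distr (PP \<sigma>) borel EE) lborel (\<lambda>e::'a. (\<beta> \<bullet> e) / (\<sigma> * norm \<beta>)) = density lborel std_normal_density"
      using D unfolding distributed_def by (simp add: distr_distr[OF Y m] comp_def)
    show "(\<lambda>e::'a. (\<beta> \<bullet> e) / (\<sigma> * norm \<beta>)) \<in> distr (PP \<sigma>) borel EE \<rightarrow>\<^sub>M lborel"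
      using Y by simp
  qed simp
qed


lemma J_measure:
  assumes D: "distributed M lborel Y std_normal_density" and A: "A \<in> sets borel"
  shows "measure M (Y -` A \<inter> space M) = J A"
proof -
  have Ym: "Y \<in> M \<rightarrow>\<^sub>M lborel" using D by (simp add: distributed_def)
  have "measure M (Y -` A \<inter> space M) = measure (distr M lborel Y) A"
    using A Ym by (simp add: measure_distr)
  also have "\<dots> = measure (density lborel std_normal_density) A"
    using D by (simp add: distributed_def)
  also have "\<dots> = J A"
  proof -
    have "emeasure (density lborel std_normal_density) A = (\<integral>\<^sup>+ x. ennreal (std_normal_density x * indicator A x) \<partial>lborel)"
      using A by (subst emeasure_density) (auto intro!: nn_integral_cong simp: indicator_def)
    also have "\<dots> = ennreal (J A)"
      using A by (intro nn_integral_eq_integral intS) (auto simp: indicator_def)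
    finally have "emeasure (density lborel std_normal_density) A = ennreal (J A)" .
    then show ?thesis
      using J_nonneg[of A] by (simp add: measure_def)
  qed
  finally show ?thesis .
qed

theorem lemma19:
  fixes r \<sigma> :: real
  assumes "\<sigma> > 0" and "r \<ge> \<sigma>"
  shows "has_margins (gaussian_iso \<sigma> :: ('a::euclidean_space) measure) r (\<sigma>\<^sup>2 / r) (1/20)"
  unfolding has_margins_def
proof (intro allI impI)
  fix \<beta> :: 'a and b :: real
  assume b0: "\<beta> \<noteq> 0" and bb: "b \<le> r * norm \<beta>"
  let ?M = "gaussian_iso \<sigma> :: 'a measure"
  define s0 where "s0 = \<sigma> * norm \<beta>"
  define Y where "Y = (\<lambda>e::'a. (\<beta> \<bullet> e) / (\<sigma> * norm \<beta>))"
  define t where "t = b / s0"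
  define a where "a = \<sigma> / r"
  have r0: "r > 0" using assms by simp
  have nb: "norm \<beta> > 0" using b0 by simp
  have s0: "s0 > 0" using assms nb by (simp add: s0_def)
  have D: "distributed ?M lborel Y std_normal_density"
    unfolding Y_def by (rule gaussian_inner_distributed[OF assms(1) b0])
  have a_eq: "\<sigma>\<^sup>2 / r * norm \<beta> / s0 = a"
    using assms nb r0 by (simp add: a_def s0_def power2_eq_square field_simps)
  have a0: "0 < a" "a \<le> 1" using assms r0 by (auto simp: a_def)
  have ta: "t * a \<le> 1"
  proof -
    have "t * a = b / (r * norm \<beta>)"
      using assms nb r0 by (simp add: t_def a_def s0_def field_simps)
    also have "\<dots> \<le> 1" using bb r0 nb by (simp add: divide_le_eq)
    finally show ?thesis .
  qed
  have al0: "\<sigma>\<^sup>2 / r * norm \<beta> \<ge> 0" using r0 by simp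
  have e1: "{e \<in> space ?M. \<beta> \<bullet> e > b + \<sigma>\<^sup>2 / r * norm \<beta> \<and> \<beta> \<bullet> e \<ge> b} = Y -` {t+a<..} \<inter> space ?M"
  proof -
    have "\<And>e. (\<beta> \<bullet> e > b + \<sigma>\<^sup>2 / r * norm \<beta> \<and> \<beta> \<bullet> e \<ge> b) \<longleftrightarrow> Y e > t + a"
    proof -
      fix e
      have "t + a = (b + \<sigma>\<^sup>2 / r * norm \<beta>) / s0"
        using a_eq by (simp add: t_def add_divide_distrib)
      moreover have "Y e = (\<beta> \<bullet> e) / s0" by (simp add: Y_def s0_def)
      ultimately have "Y e > t + a \<longleftrightarrow> \<beta> \<bullet> e > b + \<sigma>\<^sup>2 / r * norm \<beta>"
        using s0 by (simp add: divide_less_cancel)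
      then show "(\<beta> \<bullet> e > b + \<sigma>\<^sup>2 / r * norm \<beta> \<and> \<beta> \<bullet> e \<ge> b) \<longleftrightarrow> Y e > t + a"
        using al0 by auto
    qed
    then show ?thesis by auto
  qed
  have e2: "{e \<in> space ?M. \<beta> \<bullet> e \<ge> b} = Y -` {t..} \<inter> space ?M"
  proof -
    have "\<And>e. \<beta> \<bullet> e \<ge> b \<longleftrightarrow> Y e \<ge> t"
      using s0 by (simp add: Y_def t_def s0_def divide_le_cancel)
    then show ?thesis by auto
  qed
  have "cond_prob ?M (\<lambda>e. \<beta> \<bullet> e > b + \<sigma>\<^sup>2 / r * norm \<beta>) (\<lambda>e. \<beta> \<bullet> e \<ge> b) = J {t+a<..} / J {t..}"
  proof -
    have n: "measure ?M (Y -` {t+a<..} \<inter> space ?M) = J {t+a<..}" by (rule J_measure[OF D]) simp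
    have d: "measure ?M (Y -` {t..} \<inter> space ?M) = J {t..}" by (rule J_measure[OF D]) simp
    show ?thesis unfolding cond_prob_def e1 e2 n d ..
  qed
  also have "\<dots> \<ge> 1/20" by (rule J_ratio[OF a0 ta])
  finally show "cond_prob ?M (\<lambda>e. \<beta> \<bullet> e > b + \<sigma>\<^sup>2 / r * norm \<beta>) (\<lambda>e. \<beta> \<bullet> e \<ge> b) \<ge> 1/20" .
qed

end
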